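(* Let $\mathcal{K}\subset\mathbb{R}^n$ be a compact convex set and let $\phi:\mathcal{K}\to\mathbb{R}$ be a continuous convex function. Then for every $\varepsilon>0$ there exist a rational number $T>0$ and a function $f_T\in\mathrm{LSE}_T$ with rational parameters such that $$|f_T(\mathbf{x})-\phi(\mathbf{x})|\leqslant\varepsilon\quad\text{for all }\mathbf{x}\in\mathcal{K}.$$ Moreover, $T$ may be chosen of the form $T=1/p$ where $p$ is a positive integer.
   Context: For $T>0$, $\mathrm{LSE}_T$ denotes the class of functions $f_T:\mathbb{R}^n\to\mathbb{R}$ of the form $$f_T(\mathbf{x})=T\log\Big(\sum_{k=1}^K \exp\big(\langle\boldsymbol{\alpha}^{(k)},\mathbf{x}\rangle/T+\beta_k/T\big)\Big)$$ for some positive integer $K$, vectors $\boldsymbol{\alpha}^{(1)},\dots,\boldsymbol{\alpha}^{(K)}\in\mathbb{R}^n$ and real numbers $\beta_1,\dots,\beta_K$. A function $f_T\in\mathrm{LSE}_T$ has rational parameters if $T$ is rational and $f_T$ can be written in this form with all entries of the vectors $\boldsymbol{\alpha}^{(k)}$ and all $\beta_k$ rational. *)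

theory Defs
  imports "HOL-Analysis.Analysis"
begin

definition lse_fun :: "real \<Rightarrow> nat \<Rightarrow> (nat \<Rightarrow> real^'n) \<Rightarrow> (nat \<Rightarrow> real) \<Rightarrow> real^'n \<Rightarrow> real" where
  "lse_fun T K \<alpha> \<beta> x = T * ln (\<Sum>k<K. exp (inner (\<alpha> k) x / T + \<beta> k / T))"

definition LSE :: "real \<Rightarrow> (real^'n \<Rightarrow> real) set" where
  "LSE T = {f. \<exists>K \<alpha> \<beta>. K > 0 \<and> f = lse_fun T K \<alpha> \<beta>}"

definition LSE_rat :: "real \<Rightarrow> (real^'n \<Rightarrow> real) set" where
  "LSE_rat T = {f. T \<in> \<rat> \<and> (\<exists>K \<alpha> \<beta>. K > 0 \<and> (\<forall>k<K. \<forall>i. \<alpha> k $ i \<in> \<rat>)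
      \<and> (\<forall>k<K. \<beta> k \<in> \<rat>) \<and> f = lse_fun T K \<alpha> \<beta>)}"

end

theory Submission
  imports Defs
begin
lemma affine_minorant:
  fixes S :: "(real^'n) set" and \<phi> :: "real^'n \<Rightarrow> real"
  assumes "compact S" "continuous_on S \<phi>" "convex_on S \<phi>" "x0 \<in> S" "t < \<phi> x0"
  shows "\<exists>a b. (\<forall>x\<in>S. inner a x + b < \<phi> x) \<and> t < inner a x0 + b"
proof -
  have cl: "closed (epigraph S \<phi>)"
  proof -
    have "continuous_on (S \<times> UNIV) (\<lambda>p. snd p - \<phi> (fst p))"
      by (intro continuous_intros continuous_on_compose2[OF assms(2)]) auto
    then have "closed ((S \<times> UNIV) \<inter> (\<lambda>p. snd p - \<phi> (fst p)) -` {0..})"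
      by (intro continuous_closed_preimage) (auto intro: closed_Times compact_imp_closed assms(1))
    moreover have "(S \<times> UNIV) \<inter> (\<lambda>p. snd p - \<phi> (fst p)) -` {0..} = epigraph S \<phi>"
      by (auto simp: epigraph_def)
    ultimately show ?thesis by simp
  qed
  have cv: "convex (epigraph S \<phi>)" using assms(3) by (rule convex_epigraphI)
  have "(x0, t) \<notin> epigraph S \<phi>" using assms(5) by (simp add: mem_epigraph)
  from separating_hyperplane_closed_point[OF cv cl this]
  obtain w b where wb: "inner w (x0, t) < b" "\<forall>y\<in>epigraph S \<phi>. inner w y > b" by blast
  obtain u c where w: "w = (u, c)" by (cases w)
  have E: "\<And>x. x \<in> S \<Longrightarrow> inner u x + c * \<phi> x > b"
  proof -
    fix x assume "x \<in> S"
    then have "(x, \<phi> x) \<in> epigraph S \<phi>" by (simp add: mem_epigraph)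
    with wb(2) w show "inner u x + c * \<phi> x > b" by (auto simp: mult.commute)
  qed
  have "c * (\<phi> x0 - t) > 0" using E[OF assms(4)] wb(1) w by (simp add: algebra_simps)
  then have c: "c > 0" using assms(5) by (simp add: zero_less_mult_iff)
  show ?thesis
  proof (intro exI conjI ballI)
    fix x assume "x \<in> S"
    from E[OF this] c show "inner (- u /\<^sub>R c) x + b / c < \<phi> x"
      by (simp add: field_simps)
  next
    from wb(1) w c show "t < inner (- u /\<^sub>R c) x0 + b / c"
      by (simp add: field_simps)
  qed
qed
lemma rat_affine:
  fixes S :: "(real^'n) set" and \<phi> :: "real^'n \<Rightarrow> real"
  assumes "compact S" "continuous_on S \<phi>" "convex_on S \<phi>" "x0 \<in> S" "e > 0"
  shows "\<exists>a b. (\<forall>i. a $ i \<in> \<rat>) \<and> b \<in> \<rat> \<and> (\<forall>x\<in>S. inner a x + b < \<phi> x + e)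
     \<and> \<phi> x0 - e < inner a x0 + b"
proof -
  obtain a' b' where ab': "\<forall>x\<in>S. inner a' x + b' < \<phi> x" "\<phi> x0 - e/2 < inner a' x0 + b'"
    using affine_minorant[OF assms(1-4), of "\<phi> x0 - e/2"] assms(5) by auto
  obtain M where M: "M > 0" "\<forall>x\<in>S. norm x \<le> M"
    using compact_imp_bounded[OF assms(1)] bounded_pos by blast
  define \<eta> where "\<eta> = e / (4 * M * real CARD('n))"
  have eta: "\<eta> > 0" using M assms(5) by (simp add: \<eta>_def)
  have "\<forall>i. \<exists>q\<in>\<rat>. a' $ i < q \<and> q < a' $ i + \<eta>"
    using Rats_dense_in_real eta by auto
  then obtain q where q: "\<And>i. q i \<in> \<rat>" "\<And>i. a' $ i < q i \<and> q i < a' $ i + \<eta>"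
    by metis
  define a where "a = (\<chi> i. q i)"
  have "norm (a - a') \<le> (\<Sum>i\<in>UNIV. \<bar>(a - a') $ i\<bar>)" by (rule norm_le_l1_cart)
  also have "\<dots> \<le> (\<Sum>i\<in>(UNIV::'n set). \<eta>)"
  proof (intro sum_mono)
    fix i :: 'n
    have "(a - a') $ i = q i - a' $ i" by (simp add: a_def)
    then show "\<bar>(a - a') $ i\<bar> \<le> \<eta>" using q(2)[of i] by linarith
  qed
  also have "\<dots> = e / (4 * M)" using M by (simp add: \<eta>_def)
  finally have na: "norm (a - a') \<le> e / (4 * M)" .
  have inn: "\<bar>inner a x - inner a' x\<bar> \<le> e / 4" if "x \<in> S" for x
  proof -
    have "\<bar>inner a x - inner a' x\<bar> = \<bar>inner (a - a') x\<bar>" by (simp add: inner_diff_left)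
    also have "\<dots> \<le> norm (a - a') * norm x" by (rule Cauchy_Schwarz_ineq2)
    also have "\<dots> \<le> e / (4 * M) * M"
      using na M that assms(5) by (intro mult_mono) auto
    also have "\<dots> = e / 4" using M by simp
    finally show ?thesis .
  qed
  obtain b where b: "b \<in> \<rat>" "b' < b" "b < b' + e/4"
    using Rats_dense_in_real[of b' "b' + e/4"] assms(5) by auto
  show ?thesis
  proof (intro exI conjI ballI allI)
    show "a $ i \<in> \<rat>" for i using q(1) by (simp add: a_def)
    show "b \<in> \<rat>" by fact
    fix x assume "x \<in> S"
    have "inner a' x + b' < \<phi> x" using ab'(1) \<open>x \<in> S\<close> by blast
    with inn[OF \<open>x \<in> S\<close>] b assms(5) show "inner a x + b < \<phi> x + e" by linarith
  next
    from inn[OF assms(4)] ab'(2) b show "\<phi> x0 - e < inner a x0 + b" by linarith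
  qed
qed
lemma lse_bounds:
  fixes g :: "nat \<Rightarrow> real"
  assumes "T > 0" "j < K" "\<And>k. k < K \<Longrightarrow> g k \<le> U" "L \<le> g j"
  shows "L \<le> T * ln (\<Sum>k<K. exp (g k / T))" "T * ln (\<Sum>k<K. exp (g k / T)) \<le> U + T * ln K"
proof -
  have pos: "0 < (\<Sum>k<K. exp (g k / T))"
    using assms(2) by (intro sum_pos) auto
  have "exp (g j / T) \<le> (\<Sum>k<K. exp (g k / T))"
    using assms(2) by (intro member_le_sum) auto
  then have "g j / T \<le> ln (\<Sum>k<K. exp (g k / T))"
    by (subst ln_exp[symmetric]) (intro ln_mono, auto)
  then have "g j \<le> T * ln (\<Sum>k<K. exp (g k / T))" using assms(1) by (simp add: field_simps)
  then show "L \<le> T * ln (\<Sum>k<K. exp (g k / T))" using assms(4) by linarith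
  have "(\<Sum>k<K. exp (g k / T)) \<le> (\<Sum>k<K. exp (U / T))"
    using assms(1,3) by (intro sum_mono) (auto simp: divide_right_mono)
  also have "\<dots> = real K * exp (U / T)" by simp
  finally have "ln (\<Sum>k<K. exp (g k / T)) \<le> ln (real K * exp (U / T))"
    using pos by (intro ln_mono) auto
  also have "\<dots> = ln K + U / T" using assms(2) by (simp add: ln_mult)
  finally show "T * ln (\<Sum>k<K. exp (g k / T)) \<le> U + T * ln K"
    using assms(1) by (simp add: field_simps)
qed
theorem corollary1:
  fixes S :: "(real^'n) set" and \<phi> :: "real^'n \<Rightarrow> real" and \<epsilon> :: real
  assumes "compact S" and "convex S"
    and "continuous_on S \<phi>" and "convex_on S \<phi>"
    and "\<epsilon> > 0"
  shows "\<exists>T f. T > 0 \<and> T \<in> \<rat> \<and> (\<exists>p::nat. p > 0 \<and> T = 1 / real p)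
           \<and> f \<in> LSE T \<and> f \<in> LSE_rat T \<and> (\<forall>x\<in>S. \<bar>f x - \<phi> x\<bar> \<le> \<epsilon>)"
proof (cases "S = {}")
  case True
  let ?f = "lse_fun 1 1 (\<lambda>_. 0) (\<lambda>_. 0) :: real^'n \<Rightarrow> real"
  show ?thesis
  proof (rule exI[of _ 1], rule exI[of _ ?f], intro conjI)
    have "(1::nat) > 0 \<and> ?f = lse_fun 1 1 (\<lambda>_. 0) (\<lambda>_. 0)" by simp
    then show "?f \<in> LSE 1" unfolding LSE_def by (intro CollectI exI)
    have "(1::real) \<in> \<rat> \<and> (1::nat) > 0 \<and> (\<forall>k<1. \<forall>i. ((\<lambda>_. 0) :: nat \<Rightarrow> real^'n) k $ i \<in> \<rat>)
       \<and> (\<forall>k<1. ((\<lambda>_. 0) :: nat \<Rightarrow> real) k \<in> \<rat>) \<and> ?f = lse_fun 1 1 (\<lambda>_. 0) (\<lambda>_. 0)"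
      by simp
    then show "?f \<in> LSE_rat 1" unfolding LSE_rat_def by (intro CollectI conjI exI) auto
    show "\<exists>p::nat. p > 0 \<and> (1::real) = 1 / real p" by (rule exI[of _ 1]) simp
  qed (auto simp: True)
next
  case False
  define \<delta> where "\<delta> = \<epsilon> / 3"
  have d: "\<delta> > 0" using assms(5) by (simp add: \<delta>_def)
  have "\<forall>x0\<in>S. \<exists>a b. (\<forall>i. a $ i \<in> \<rat>) \<and> b \<in> \<rat> \<and> (\<forall>x\<in>S. inner a x + b < \<phi> x + \<delta>)
     \<and> \<phi> x0 - \<delta> < inner a x0 + b"
    using rat_affine[OF assms(1,3,4) _ d] by blast
  then have "\<exists>A. \<forall>x0\<in>S. \<exists>b. (\<forall>i. A x0 $ i \<in> \<rat>) \<and> b \<in> \<rat> \<and> (\<forall>x\<in>S. inner (A x0) x + b < \<phi> x + \<delta>)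
     \<and> \<phi> x0 - \<delta> < inner (A x0) x0 + b" by (rule bchoice)
  then obtain A where "\<forall>x0\<in>S. \<exists>b. (\<forall>i. A x0 $ i \<in> \<rat>) \<and> b \<in> \<rat> \<and> (\<forall>x\<in>S. inner (A x0) x + b < \<phi> x + \<delta>)
     \<and> \<phi> x0 - \<delta> < inner (A x0) x0 + b" by blast
  then have "\<exists>B. \<forall>x0\<in>S. (\<forall>i. A x0 $ i \<in> \<rat>) \<and> B x0 \<in> \<rat> \<and> (\<forall>x\<in>S. inner (A x0) x + B x0 < \<phi> x + \<delta>)
     \<and> \<phi> x0 - \<delta> < inner (A x0) x0 + B x0" by (rule bchoice)
  then obtain B where AB0: "\<forall>x0\<in>S. (\<forall>i. A x0 $ i \<in> \<rat>) \<and> B x0 \<in> \<rat> \<and> (\<forall>x\<in>S. inner (A x0) x + B x0 < \<phi> x + \<delta>)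
     \<and> \<phi> x0 - \<delta> < inner (A x0) x0 + B x0" by blast
  have AB: "\<And>x0. x0 \<in> S \<Longrightarrow> (\<forall>i. A x0 $ i \<in> \<rat>) \<and> B x0 \<in> \<rat>
     \<and> (\<forall>x\<in>S. inner (A x0) x + B x0 < \<phi> x + \<delta>) \<and> \<phi> x0 - \<delta> < inner (A x0) x0 + B x0"
    using AB0 by blast
  have "\<forall>x0\<in>S. \<exists>V. open V \<and> x0 \<in> V \<and> (\<forall>x\<in>V \<inter> S. \<phi> x - \<delta> < inner (A x0) x + B x0)"
  proof
    fix x0 assume x0: "x0 \<in> S"
    have hc: "continuous_on S (\<lambda>x. inner (A x0) x + B x0 - \<phi> x + \<delta>)"
      by (intro continuous_intros assms(3))
    then obtain V where V: "open V" "V \<inter> S = (\<lambda>x. inner (A x0) x + B x0 - \<phi> x + \<delta>) -` {0<..} \<inter> S"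
      using continuous_on_open_invariant[THEN iffD1, OF hc, rule_format, OF open_greaterThan] by blast
    show "\<exists>V. open V \<and> x0 \<in> V \<and> (\<forall>x\<in>V \<inter> S. \<phi> x - \<delta> < inner (A x0) x + B x0)"
    proof (intro exI conjI)
      show "x0 \<in> V" using V(2) AB[OF x0] x0 by (auto simp: set_eq_iff)
      show "\<forall>x\<in>V \<inter> S. \<phi> x - \<delta> < inner (A x0) x + B x0" using V(2) by auto
    qed fact
  qed
  then have "\<exists>V. \<forall>x0\<in>S. open (V x0) \<and> x0 \<in> V x0 \<and>
      (\<forall>x\<in>V x0 \<inter> S. \<phi> x - \<delta> < inner (A x0) x + B x0)" by (rule bchoice)
  then obtain V where V0: "\<forall>x0\<in>S. open (V x0) \<and> x0 \<in> V x0 \<and>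
      (\<forall>x\<in>V x0 \<inter> S. \<phi> x - \<delta> < inner (A x0) x + B x0)" by blast
  have V: "\<And>x0. x0 \<in> S \<Longrightarrow> open (V x0) \<and> x0 \<in> V x0 \<and>
      (\<forall>x\<in>V x0 \<inter> S. \<phi> x - \<delta> < inner (A x0) x + B x0)" using V0 by blast
  obtain C where C: "C \<subseteq> S" "finite C" "S \<subseteq> (\<Union>c\<in>C. V c)"
    using compactE_image[OF assms(1), of S V] V by blast
  define K where "K = card C"
  have Cne: "C \<noteq> {}" using C(3) False by auto
  have K: "K > 0" using Cne C(2) by (simp add: K_def card_gt_0_iff)
  obtain h where h: "bij_betw h {0..<K} C" using ex_bij_betw_nat_finite[OF C(2)] K_def by blast
  define \<alpha> where "\<alpha> k = A (h k)" for k
  define \<beta> where "\<beta> k = B (h k)" for k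
  have hS: "h k \<in> S" if "k < K" for k using h C(1) that by (auto simp: bij_betw_def)
  define p where "p = nat \<lceil>3 * ln (real K) / \<epsilon>\<rceil> + 1"
  define T where "T = 1 / real p"
  have p: "p > 0" by (simp add: p_def)
  have T: "T > 0" using p by (simp add: T_def)
  have TlnK: "T * ln (real K) \<le> \<delta>"
  proof -
    have "3 * ln (real K) / \<epsilon> \<le> real p" unfolding p_def by linarith
    then have "3 * ln (real K) \<le> real p * \<epsilon>" using assms(5) by (simp add: field_simps)
    then show ?thesis using p by (simp add: T_def \<delta>_def field_simps)
  qed
  define f where "f = (lse_fun T K \<alpha> \<beta> :: real^'n \<Rightarrow> real)"
  show ?thesis
  proof (intro exI[of _ T] exI[of _ f] conjI ballI)
    show "T > 0" by fact
    show "T \<in> \<rat>" by (simp add: T_def)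
    show "\<exists>p::nat. p > 0 \<and> T = 1 / real p" using p T_def by blast
    show "f \<in> LSE T" unfolding LSE_def f_def using K by blast
    have "(\<forall>k<K. \<forall>i. \<alpha> k $ i \<in> \<rat>) \<and> (\<forall>k<K. \<beta> k \<in> \<rat>)"
      using AB hS unfolding \<alpha>_def \<beta>_def by blast
    moreover have "T \<in> \<rat>" by (simp add: T_def)
    ultimately show "f \<in> LSE_rat T" unfolding LSE_rat_def f_def using K by blast
    fix x assume x: "x \<in> S"
    obtain c where c: "c \<in> C" "x \<in> V c" using C(3) x by blast
    obtain j where j: "j < K" "h j = c" using h c(1) by (auto simp: bij_betw_def)
    define g where "g k = inner (\<alpha> k) x + \<beta> k" for k
    have fx: "f x = T * ln (\<Sum>k<K. exp (g k / T))"
      by (simp add: f_def lse_fun_def g_def add_divide_distrib)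
    have up: "g k \<le> \<phi> x + \<delta>" if "k < K" for k
      using AB[OF hS[OF that]] x by (auto simp: g_def \<alpha>_def \<beta>_def intro: less_imp_le)
    have lo: "\<phi> x - \<delta> \<le> g j"
    proof -
      have "c \<in> S" using c(1) C(1) by blast
      then have "\<phi> x - \<delta> < inner (A c) x + B c" using V[of c] c(2) x by blast
      then show ?thesis using j(2) by (simp add: g_def \<alpha>_def \<beta>_def)
    qed
    from lse_bounds[where g=g and U="\<phi> x + \<delta>" and L="\<phi> x - \<delta>", OF T j(1) up lo] TlnK fx
    show "\<bar>f x - \<phi> x\<bar> \<le> \<epsilon>" by (simp add: \<delta>_def abs_le_iff)
  qed
qed
end
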